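(* Let $\Sigma=\bigcup_{j=1}^{g+1}[a_j,b_j]\subset\mathbb{R}$ be a union of pairwise disjoint compact intervals and $w$ a weight on $\Sigma$ of the form \[ w(x)=\sum_{j=1}^{g+1}\mathbb{1}_{[a_j,b_j]}(x)\,h_j(x)\left(\sqrt{x-a_j}\right)^{\alpha_j}\left(\sqrt{b_j-x}\right)^{\beta_j},\qquad \alpha_j,\beta_j\in\{-1,1\}, \] with $h_j$ positive on $[a_j,b_j]$ and analytic in a neighborhood of it, $\int_\Sigma w=1$; let $p_0,p_1,\dots$ be its orthonormal polynomials. Let $\mathbf{A}\in\mathbb{C}^{n\times n}$ be generic, $\mathbf{A}=\mathbf{V}\boldsymbol{\Lambda}\mathbf{V}^{-1}$ with $\boldsymbol{\Lambda}=\operatorname{diag}(\lambda_1,\ldots,\lambda_n)$, and $\mathbf{b}\in\mathbb{C}^n$. Let $\Gamma$ be a counterclockwise contour enclosing the spectrum of $\mathbf{A}$, $f$ analytic in a region containing $\Gamma$ and its interior, so that $f(\mathbf{A})\mathbf{b}=\frac{1}{2\pi i}\int_\Gamma f(z)(z\mathbf{I}-\mathbf{A})^{-1}\mathbf{b}\,dz$. Let $z_1,\ldots,z_m\in\Gamma\setminus\Sigma$ be quadrature nodes with weights $\omega_1,\ldots,\omega_m$, and define \[ f_{k,m}(\mathbf{A})\mathbf{b}=-\sum_{\ell=0}^{k-1}\left(\sum_{j=1}^m f(z_j)\,\omega_j\,\mathcal{C}_\Sigma[p_\ell w](z_j)\right)p_\ell(\mathbf{A})\mathbf{b},\qquad \rho_m(x)=\int_\Gamma\frac{f(z)}{z-x}\,dz-\sum_{j=1}^m\frac{f(z_j)}{z_j-x}\,\omega_j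 . \] Assume the eigenvalues satisfy $\operatorname{Re}\mathfrak{g}(\lambda_\ell)<\min_{1\le j\le m}\operatorname{Re}\mathfrak{g}(z_j)$ for all $\ell$, that $|f(z)|\le M$ for $z\in\Gamma$, and that $\sum_{j=1}^m|\omega_j|\le 2\pi L$. Then \[ \|f(\mathbf{A})\mathbf{b}-f_{k,m}(\mathbf{A})\mathbf{b}\|_2\le\frac{1}{2\pi}\|\mathbf{V}\|_2\|\mathbf{V}^{-1}\|_2\|\mathbf{b}\|_2\max_{1\le\ell\le n}|\rho_m(\lambda_\ell)|+LM\max_{1\le j\le m}E_k(z_j), \] where $E_k(z)=\left\|\sum_{j=0}^{k-1}\mathcal{S}_\Sigma[p_jw](z)\,p_j(\mathbf{A})\mathbf{b}-(\mathbf{A}-z\mathbf{I})^{-1}\mathbf{b}\right\|_2$.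
   Context: For $z\notin\Sigma$: $\mathcal{C}_\Sigma[p_\ell w](z)=\frac{1}{2\pi i}\int_\Sigma\frac{p_\ell(s)w(s)}{s-z}ds$ and $\mathcal{S}_\Sigma[p_\ell w](z)=2\pi i\,\mathcal{C}_\Sigma[p_\ell w](z)$. $\|\cdot\|_2$ is the Euclidean norm and induced matrix norm. A matrix is generic if it is diagonalizable and has no eigenvalue at an endpoint $a_j,b_j$. $\mathfrak{g}$ is the exterior Green's function of $\Sigma$ with pole at infinity: $\operatorname{Re}\mathfrak{g}$ is harmonic on $\mathbb{C}\setminus\Sigma$, continuous, zero on $\Sigma$, and $\operatorname{Re}\mathfrak{g}(z)=\log|z|+O(1)$ as $z\to\infty$. *)

theory Defs
  imports "HOL-Complex_Analysis.Complex_Analysis" "HOL-Computational_Algebra.Polynomial"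
begin

fun mpow :: "complex^'n^'n \<Rightarrow> nat \<Rightarrow> complex^'n^'n" where
  "mpow A 0 = mat 1"
| "mpow A (Suc k) = A ** mpow A k"

definition poly_mat :: "real poly \<Rightarrow> complex^'n^'n \<Rightarrow> complex^'n^'n" where
  "poly_mat p A = (\<Sum>i\<le>degree p. coeff p i *\<^sub>R mpow A i)"

definition diag_mat :: "('n \<Rightarrow> complex) \<Rightarrow> complex^'n^'n" where
  "diag_mat d = (\<chi> i j. if i = j then d i else 0)"

text \<open>The set Sigma as union of the intervals [a_j,b_j], j < N (N = g+1).\<close>
definition Sigma_set :: "nat \<Rightarrow> (nat \<Rightarrow> real) \<Rightarrow> (nat \<Rightarrow> real) \<Rightarrow> real set" where
  "Sigma_set N a b = (\<Union>j<N. {a j..b j})"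

definition weight_fun :: "nat \<Rightarrow> (nat \<Rightarrow> real) \<Rightarrow> (nat \<Rightarrow> real) \<Rightarrow> (nat \<Rightarrow> real \<Rightarrow> real)
    \<Rightarrow> (nat \<Rightarrow> int) \<Rightarrow> (nat \<Rightarrow> int) \<Rightarrow> real \<Rightarrow> real" where
  "weight_fun N a b h \<alpha> \<beta> x =
     (\<Sum>j<N. indicator {a j..b j} x * h j x * (sqrt (x - a j) powi \<alpha> j) * (sqrt (b j - x) powi \<beta> j))"

definition cauchy_transform :: "real set \<Rightarrow> (real \<Rightarrow> complex) \<Rightarrow> complex \<Rightarrow> complex" where
  "cauchy_transform S F z = (1 / (2 * pi * \<i>)) * integral S (\<lambda>s. F s / (complex_of_real s - z))"

definition S_transform :: "real set \<Rightarrow> (real \<Rightarrow> complex) \<Rightarrow> complex \<Rightarrow> complex" where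
  "S_transform S F z = 2 * pi * \<i> * cauchy_transform S F z"

definition harmonic_on :: "(complex \<Rightarrow> real) \<Rightarrow> complex set \<Rightarrow> bool" where
  "harmonic_on u U \<longleftrightarrow> open U \<and>
     (\<forall>z\<in>U. \<exists>r>0. \<exists>F. F holomorphic_on ball z r \<and> ball z r \<subseteq> U \<and> (\<forall>w\<in>ball z r. u w = Re (F w)))"

text \<open>G is (the real part of) the exterior Green's function of S with pole at infinity.\<close>
definition exterior_green :: "real set \<Rightarrow> (complex \<Rightarrow> real) \<Rightarrow> bool" where
  "exterior_green S G \<longleftrightarrow>
     harmonic_on G (- (complex_of_real ` S)) \<and> continuous_on UNIV G \<and>
     (\<forall>x\<in>S. G (complex_of_real x) = 0) \<and>
     (\<exists>C R. \<forall>z. norm z \<ge> R \<longrightarrow> \<bar>G z - ln (norm z)\<bar> \<le> C)"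

definition orthonormal_polys :: "real set \<Rightarrow> (real \<Rightarrow> real) \<Rightarrow> (nat \<Rightarrow> real poly) \<Rightarrow> bool" where
  "orthonormal_polys S w p \<longleftrightarrow>
     (\<forall>l. degree (p l) = l \<and> lead_coeff (p l) > 0) \<and>
     (\<forall>i j. ((\<lambda>x. poly (p i) x * poly (p j) x * w x) has_integral (if i = j then 1 else 0)) S)"

definition fun_mat_vec :: "(real \<Rightarrow> complex) \<Rightarrow> (complex \<Rightarrow> complex) \<Rightarrow> complex^'n^'n \<Rightarrow> complex^'n \<Rightarrow> complex^'n" where
  "fun_mat_vec \<gamma> f A b =
     (\<chi> i. (1 / (2 * pi * \<i>)) * contour_integral \<gamma> (\<lambda>z. f z * ((matrix_inv (mat z - A) *v b) $ i)))"

end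

theory Submission
  imports Defs
begin


lemma inv_props:
  fixes V :: "'a::field^'n^'n"
  assumes "invertible V"
  shows "V ** matrix_inv V = mat 1" "matrix_inv V ** V = mat 1"
proof -
  have "\<exists>W. V ** W = mat 1 \<and> W ** V = mat 1" using assms by (simp add: invertible_def)
  hence "V ** matrix_inv V = mat 1 \<and> matrix_inv V ** V = mat 1"
    unfolding matrix_inv_def by (rule someI_ex)
  thus "V ** matrix_inv V = mat 1" "matrix_inv V ** V = mat 1" by auto
qed

lemma matrix_inv_eqI:
  fixes X Y :: "'a::field^'n^'n"
  assumes "X ** Y = mat 1"
  shows "matrix_inv X = Y"
proof -
  have YX: "Y ** X = mat 1" using assms matrix_left_right_inverse by blast
  have "X ** matrix_inv X = mat 1 \<and> matrix_inv X ** X = mat 1"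
    unfolding matrix_inv_def by (rule someI[of _ Y]) (use assms YX in auto)
  hence "matrix_inv X = matrix_inv X ** (X ** Y)" using assms by simp
  also have "\<dots> = (matrix_inv X ** X) ** Y" by (simp add: matrix_mul_assoc)
  also have "\<dots> = Y" using \<open>_ \<and> _\<close> by simp
  finally show ?thesis .
qed

lemma ifz: "(if P then a else (0::'a::semiring_0)) * b = (if P then a * b else 0)" by simp

lemma diag_mv: "diag_mat d *v w = (\<chi> k. d k * w $ k)"
  by (simp add: vec_eq_iff diag_mat_def matrix_vector_mult_def ifz)

lemma diag_comp: "(V ** diag_mat d ** W) $ i $ j = (\<Sum>k\<in>UNIV. V $ i $ k * d k * W $ k $ j)"
  by (simp add: matrix_matrix_mult_def diag_mat_def if_distrib sum_distrib_right cong: if_cong)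

lemma diag_mult: "diag_mat d ** diag_mat e = diag_mat (\<lambda>k. d k * e k)"
  by (auto simp add: vec_eq_iff matrix_matrix_mult_def diag_mat_def ifz)

lemma diag_one: "diag_mat (\<lambda>k. 1) = mat 1"
  by (simp add: diag_mat_def mat_def)

lemma inv_conj:
  fixes V :: "complex^'n^'n"
  assumes "invertible V" "\<And>k. d k * e k = 1"
  shows "matrix_inv (V ** diag_mat d ** matrix_inv V) = V ** diag_mat e ** matrix_inv V"
proof (rule matrix_inv_eqI)
  have "V ** diag_mat d ** matrix_inv V ** (V ** diag_mat e ** matrix_inv V)
      = V ** diag_mat d ** (matrix_inv V ** V) ** diag_mat e ** matrix_inv V"
    by (simp add: matrix_mul_assoc)
  also have "\<dots> = V ** (diag_mat d ** diag_mat e) ** matrix_inv V"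
    using inv_props[OF assms(1)] by (simp add: matrix_mul_assoc)
  also have "\<dots> = mat 1" using assms inv_props[OF assms(1)] by (simp add: diag_mult diag_one)
  finally show "V ** diag_mat d ** matrix_inv V ** (V ** diag_mat e ** matrix_inv V) = mat 1" .
qed

lemma shift:
  fixes V :: "complex^'n^'n"
  assumes "invertible V" "A = V ** diag_mat lam ** matrix_inv V"
  shows "mat z - A = V ** diag_mat (\<lambda>k. z - lam k) ** matrix_inv V"
    "A - mat z = V ** diag_mat (\<lambda>k. lam k - z) ** matrix_inv V"
proof -
  have I: "(\<Sum>k\<in>UNIV. V $ i $ k * matrix_inv V $ k $ j) = (if i = j then 1 else 0)" for i j
    using arg_cong[OF inv_props(1)[OF assms(1)], of "\<lambda>M. M $ i $ j"]
    by (simp add: matrix_matrix_mult_def mat_def)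
  have "(mat z - A) $ i $ j = (V ** diag_mat (\<lambda>k. z - lam k) ** matrix_inv V) $ i $ j" for i j
  proof -
    have "(mat z - A) $ i $ j = z * (\<Sum>k\<in>UNIV. V $ i $ k * matrix_inv V $ k $ j) - A $ i $ j"
      using I[of i j] by (simp add: mat_def)
    also have "\<dots> = (V ** diag_mat (\<lambda>k. z - lam k) ** matrix_inv V) $ i $ j"
      unfolding assms(2) diag_comp
      by (simp add: sum_distrib_left sum_subtractf[symmetric] algebra_simps)
    finally show ?thesis .
  qed
  thus "mat z - A = V ** diag_mat (\<lambda>k. z - lam k) ** matrix_inv V" by (simp add: vec_eq_iff)
  have "(A - mat z) $ i $ j = (V ** diag_mat (\<lambda>k. lam k - z) ** matrix_inv V) $ i $ j" for i j
  proof -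
    have "(A - mat z) $ i $ j = A $ i $ j - z * (\<Sum>k\<in>UNIV. V $ i $ k * matrix_inv V $ k $ j)"
      using I[of i j] by (simp add: mat_def)
    also have "\<dots> = (V ** diag_mat (\<lambda>k. lam k - z) ** matrix_inv V) $ i $ j"
      unfolding assms(2) diag_comp
      by (simp add: sum_distrib_left sum_subtractf[symmetric] algebra_simps)
    finally show ?thesis .
  qed
  thus "A - mat z = V ** diag_mat (\<lambda>k. lam k - z) ** matrix_inv V" by (simp add: vec_eq_iff)
qed

lemma resolvent:
  fixes V :: "complex^'n^'n"
  assumes "invertible V" "A = V ** diag_mat lam ** matrix_inv V" "\<And>k. z \<noteq> lam k"
  shows "matrix_inv (mat z - A) *v bv = (\<chi> i. \<Sum>k\<in>UNIV. V $ i $ k * ((matrix_inv V *v bv) $ k / (z - lam k)))"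
    "matrix_inv (A - mat z) *v bv = - (\<chi> i. \<Sum>k\<in>UNIV. V $ i $ k * ((matrix_inv V *v bv) $ k / (z - lam k)))"
proof -
  have "matrix_inv (mat z - A) = V ** diag_mat (\<lambda>k. 1 / (z - lam k)) ** matrix_inv V"
    unfolding shift[OF assms(1,2)] by (rule inv_conj) (use assms in auto)
  hence "matrix_inv (mat z - A) *v bv = V *v (diag_mat (\<lambda>k. 1 / (z - lam k)) *v (matrix_inv V *v bv))"
    by (simp add: matrix_vector_mul_assoc matrix_mul_assoc)
  thus "matrix_inv (mat z - A) *v bv = (\<chi> i. \<Sum>k\<in>UNIV. V $ i $ k * ((matrix_inv V *v bv) $ k / (z - lam k)))"
    by (simp only: diag_mv) (simp add: matrix_vector_mul_assoc[symmetric] diag_mv vec_eq_iff matrix_vector_mult_def)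
  have "matrix_inv (A - mat z) = V ** diag_mat (\<lambda>k. 1 / (lam k - z)) ** matrix_inv V"
    unfolding shift[OF assms(1,2)] by (rule inv_conj) (use assms in \<open>auto simp: right_minus_eq\<close>)
  moreover have "1 / (lam k - z) = - (1 / (z - lam k))" for k by (simp add: minus_divide_right)
  ultimately have "matrix_inv (A - mat z) *v bv = V *v (diag_mat (\<lambda>k. - (1 / (z - lam k))) *v (matrix_inv V *v bv))"
    by (simp add: matrix_vector_mul_assoc matrix_mul_assoc)
  thus "matrix_inv (A - mat z) *v bv = - (\<chi> i. \<Sum>k\<in>UNIV. V $ i $ k * ((matrix_inv V *v bv) $ k / (z - lam k)))"
    by (simp only: diag_mv) (simp add: matrix_vector_mul_assoc[symmetric] diag_mv vec_eq_iff matrix_vector_mult_def sum_negf[symmetric])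
qed

lemma norm_smult_vec: "norm (c *s (x :: complex^'n)) = norm c * norm x"
  by (simp add: norm_vec_def norm_mult L2_set_right_distrib)

lemma norm_diag_le:
  fixes x :: "complex^'n"
  assumes "\<And>k. norm (r k) \<le> R"
  shows "norm (\<chi> k. r k * x $ k) \<le> R * norm x"
proof -
  have R: "0 \<le> R" using assms[of undefined] norm_ge_zero order_trans by blast
  have "norm (\<chi> k. r k * x $ k) = L2_set (\<lambda>k. norm (r k) * norm (x $ k)) UNIV"
    by (simp add: norm_vec_def norm_mult)
  also have "\<dots> \<le> L2_set (\<lambda>k. R * norm (x $ k)) UNIV"
    by (rule L2_set_mono) (auto intro: mult_right_mono assms)
  also have "\<dots> = R * norm x" using R by (simp add: norm_vec_def L2_set_right_distrib)
  finally show ?thesis .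
qed


theorem theorem4p2:
  fixes N :: nat and a b :: "nat \<Rightarrow> real" and h :: "nat \<Rightarrow> real \<Rightarrow> real"
    and \<alpha> \<beta> :: "nat \<Rightarrow> int" and p :: "nat \<Rightarrow> real poly"
    and A V :: "complex^'n^'n" and lam :: "'n \<Rightarrow> complex" and bv :: "complex^'n"
    and \<gamma> :: "real \<Rightarrow> complex" and f :: "complex \<Rightarrow> complex" and U :: "complex set"
    and m k :: nat and z \<omega> :: "nat \<Rightarrow> complex" and G :: "complex \<Rightarrow> real"
    and M L :: real
    and \<Sigma> :: "real set" and w :: "real \<Rightarrow> real" and pw :: "nat \<Rightarrow> real \<Rightarrow> complex"
    and fkm :: "complex^'n" and \<rho> :: "complex \<Rightarrow> complex" and E :: "complex \<Rightarrow> real"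
  assumes \<Sigma>_def: "\<Sigma> = Sigma_set N a b"
    and w_def: "w = weight_fun N a b h \<alpha> \<beta>"
    and pw_def: "pw = (\<lambda>l s. complex_of_real (poly (p l) s * w s))"
    and fkm_def: "fkm = - (\<Sum>l<k. (\<Sum>j\<in>{1..m}. f (z j) * \<omega> j * cauchy_transform \<Sigma> (pw l) (z j))
                          *s (poly_mat (p l) A *v bv))"
    and \<rho>_def: "\<rho> = (\<lambda>x. contour_integral \<gamma> (\<lambda>\<zeta>. f \<zeta> / (\<zeta> - x)) - (\<Sum>j\<in>{1..m}. f (z j) / (z j - x) * \<omega> j))"
    and E_def: "E = (\<lambda>\<zeta>. norm ((\<Sum>j<k. S_transform \<Sigma> (pw j) \<zeta> *s (poly_mat (p j) A *v bv))
                         - matrix_inv (A - mat \<zeta>) *v bv))"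
    and N_pos: "N \<ge> 1"
    and intervals: "\<And>j. j < N \<Longrightarrow> a j < b j"
    and disjoint: "\<And>i j. i < N \<Longrightarrow> j < N \<Longrightarrow> i \<noteq> j \<Longrightarrow> {a i..b i} \<inter> {a j..b j} = {}"
    and exps: "\<And>j. j < N \<Longrightarrow> \<alpha> j \<in> {-1, 1} \<and> \<beta> j \<in> {-1, 1}"
    and h_pos: "\<And>j x. j < N \<Longrightarrow> x \<in> {a j..b j} \<Longrightarrow> h j x > 0"
    and h_analytic: "\<And>j. j < N \<Longrightarrow> \<exists>H W. open W \<and> complex_of_real ` {a j..b j} \<subseteq> W \<and>
                         H holomorphic_on W \<and>
                         (\<forall>x. complex_of_real x \<in> W \<longrightarrow> H (complex_of_real x) = complex_of_real (h j x))"
    and w_normalized: "(w has_integral 1) \<Sigma>"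
    and ONP: "orthonormal_polys \<Sigma> w p"
    and V_inv: "invertible V"
    and A_diag: "A = V ** diag_mat lam ** matrix_inv V"
    and eig_not_endpoint: "\<And>l j. j < N \<Longrightarrow> lam l \<noteq> complex_of_real (a j) \<and> lam l \<noteq> complex_of_real (b j)"
    and \<gamma>_path: "valid_path \<gamma>" "simple_path \<gamma>" "pathfinish \<gamma> = pathstart \<gamma>"
    and \<gamma>_ccw: "\<And>x. x \<notin> path_image \<gamma> \<Longrightarrow> winding_number \<gamma> x = 0 \<or> winding_number \<gamma> x = 1"
    and \<gamma>_encloses: "\<And>l. lam l \<notin> path_image \<gamma> \<and> winding_number \<gamma> (lam l) = 1"
    and f_holo: "open U" "f holomorphic_on U" "path_image \<gamma> \<subseteq> U"
      "\<And>x. x \<notin> path_image \<gamma> \<Longrightarrow> winding_number \<gamma> x \<noteq> 0 \<Longrightarrow> x \<in> U"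
    and m_pos: "m \<ge> 1"
    and nodes: "\<And>j. j \<in> {1..m} \<Longrightarrow> z j \<in> path_image \<gamma> \<and> z j \<notin> complex_of_real ` \<Sigma>"
    and green: "exterior_green \<Sigma> G"
    and eig_green: "\<And>l. G (lam l) < Min ((\<lambda>j. G (z j)) ` {1..m})"
    and f_bound: "\<And>\<zeta>. \<zeta> \<in> path_image \<gamma> \<Longrightarrow> norm (f \<zeta>) \<le> M"
    and weights_bound: "(\<Sum>j\<in>{1..m}. norm (\<omega> j)) \<le> 2 * pi * L"
  shows "norm (fun_mat_vec \<gamma> f A bv - fkm)
           \<le> 1 / (2 * pi) * onorm (\<lambda>x. V *v x) * onorm (\<lambda>x. matrix_inv V *v x) * norm bv
               * Max (range (\<lambda>l. norm (\<rho> (lam l))))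
             + L * M * Max ((\<lambda>j. E (z j)) ` {1..m})"
proof -
  let ?I = "1 / (2 * pi * \<i>)"
  define c where "c = matrix_inv V *v bv"
  define CI where "CI = (\<lambda>k. contour_integral \<gamma> (\<lambda>\<zeta>. f \<zeta> / (\<zeta> - lam k)))"
  define Qs where "Qs = (\<lambda>j. matrix_inv (mat (z j) - A) *v bv)"
  define X where "X = (\<lambda>j. (\<Sum>l<k. S_transform \<Sigma> (pw l) (z j) *s (poly_mat (p l) A *v bv)))"
  define Rm where "Rm = Max (range (\<lambda>l. norm (\<rho> (lam l))))"
  define Em where "Em = Max ((\<lambda>j. E (z j)) ` {1..m})"
  have lam_off: "\<zeta> \<noteq> lam l" if "\<zeta> \<in> path_image \<gamma>" for \<zeta> l
    using \<gamma>_encloses[of l] that by auto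
  have res: "matrix_inv (mat \<zeta> - A) *v bv = (\<chi> i. \<Sum>k\<in>UNIV. V $ i $ k * (c $ k / (\<zeta> - lam k)))"
    "matrix_inv (A - mat \<zeta>) *v bv = - (\<chi> i. \<Sum>k\<in>UNIV. V $ i $ k * (c $ k / (\<zeta> - lam k)))"
    if "\<zeta> \<in> path_image \<gamma>" for \<zeta>
    using resolvent[OF V_inv A_diag, of \<zeta> bv] lam_off[OF that] unfolding c_def by auto
  have zpi: "z j \<in> path_image \<gamma>" if "j \<in> {1..m}" for j using nodes[OF that] by auto
  have Qs_eq: "Qs j = (\<chi> i. \<Sum>k\<in>UNIV. V $ i $ k * (c $ k / (z j - lam k)))" if "j \<in> {1..m}" for j
    unfolding Qs_def using res(1)[OF zpi[OF that]] .
  have Eeq: "E (z j) = norm (X j + Qs j)" if "j \<in> {1..m}" for j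
    unfolding E_def X_def Qs_def using res[OF zpi[OF that]] by simp
  have integ: "(\<lambda>\<zeta>. f \<zeta> / (\<zeta> - lam l)) contour_integrable_on \<gamma>" for l
  proof (rule contour_integrable_holomorphic_simple[where S = "U - {lam l}"])
    show "(\<lambda>\<zeta>. f \<zeta> / (\<zeta> - lam l)) holomorphic_on U - {lam l}"
      by (intro holomorphic_intros holomorphic_on_subset[OF f_holo(2)]) auto
    show "open (U - {lam l})" using f_holo(1) by auto
    show "valid_path \<gamma>" by (rule \<gamma>_path(1))
    show "path_image \<gamma> \<subseteq> U - {lam l}" using f_holo(3) lam_off by auto
  qed
  have hA: "fun_mat_vec \<gamma> f A bv = (\<chi> i. ?I * (\<Sum>k\<in>UNIV. V $ i $ k * c $ k * CI k))"
  proof -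
    have "contour_integral \<gamma> (\<lambda>\<zeta>. f \<zeta> * ((matrix_inv (mat \<zeta> - A) *v bv) $ i))
        = (\<Sum>k\<in>UNIV. V $ i $ k * c $ k * CI k)" for i
    proof -
      have "contour_integral \<gamma> (\<lambda>\<zeta>. f \<zeta> * ((matrix_inv (mat \<zeta> - A) *v bv) $ i))
          = contour_integral \<gamma> (\<lambda>\<zeta>. \<Sum>k\<in>UNIV. V $ i $ k * c $ k * (f \<zeta> / (\<zeta> - lam k)))"
        by (rule contour_integral_eq) (simp add: res(1) sum_distrib_left mult_ac)
      also have "\<dots> = (\<Sum>k\<in>UNIV. contour_integral \<gamma> (\<lambda>\<zeta>. V $ i $ k * c $ k * (f \<zeta> / (\<zeta> - lam k))))"
        by (rule contour_integral_sum, simp, rule contour_integrable_lmul, rule integ)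
      also have "\<dots> = (\<Sum>k\<in>UNIV. V $ i $ k * c $ k * CI k)"
        unfolding CI_def by (rule sum.cong, simp, rule contour_integral_lmul, rule integ)
      finally show ?thesis .
    qed
    thus ?thesis by (simp add: fun_mat_vec_def vec_eq_iff)
  qed
  have hfkm: "fkm = (\<chi> i. - (?I * (\<Sum>j\<in>{1..m}. f (z j) * \<omega> j * X j $ i)))"
  proof -
    have C: "cauchy_transform \<Sigma> F \<zeta> = ?I * S_transform \<Sigma> F \<zeta>" for F \<zeta>
      by (simp add: S_transform_def)
    have "(\<Sum>l<k. (\<Sum>j\<in>{1..m}. f (z j) * \<omega> j * cauchy_transform \<Sigma> (pw l) (z j)) * (poly_mat (p l) A *v bv) $ i)
        = ?I * (\<Sum>j\<in>{1..m}. f (z j) * \<omega> j * X j $ i)" for i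
      unfolding X_def C
      by (simp add: sum_component sum_distrib_left sum_distrib_right mult_ac sum.swap[of _ "{..<k}"])
    thus ?thesis unfolding fkm_def by (simp add: vec_eq_iff sum_component)
  qed
  define T1 where "T1 = ?I *s (V *v (\<chi> k. \<rho> (lam k) * c $ k))"
  define T2 where "T2 = ?I *s (\<Sum>j\<in>{1..m}. (f (z j) * \<omega> j) *s (X j + Qs j))"
  have heq: "fun_mat_vec \<gamma> f A bv - fkm = T1 + T2"
  proof -
    have "(\<Sum>k\<in>UNIV. V $ i $ k * c $ k * CI k) + (\<Sum>j\<in>{1..m}. f (z j) * \<omega> j * X j $ i)
      = (\<Sum>k\<in>UNIV. V $ i $ k * (\<rho> (lam k) * c $ k))
        + (\<Sum>j\<in>{1..m}. f (z j) * \<omega> j * (X j $ i + Qs j $ i))" for i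
    proof -
      have sw: "(\<Sum>j\<in>{1..m}. f (z j) * \<omega> j * Qs j $ i)
          = (\<Sum>k\<in>UNIV. V $ i $ k * c $ k * (\<Sum>j\<in>{1..m}. f (z j) / (z j - lam k) * \<omega> j))"
      proof -
        have "(\<Sum>j\<in>{1..m}. f (z j) * \<omega> j * Qs j $ i)
            = (\<Sum>j\<in>{1..m}. \<Sum>k\<in>UNIV. V $ i $ k * c $ k * (f (z j) / (z j - lam k) * \<omega> j))"
          by (rule sum.cong) (auto simp: Qs_eq sum_distrib_left mult_ac)
        also have "\<dots> = (\<Sum>k\<in>UNIV. V $ i $ k * c $ k * (\<Sum>j\<in>{1..m}. f (z j) / (z j - lam k) * \<omega> j))"
          by (subst sum.swap) (simp add: sum_distrib_left)
        finally show ?thesis .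
      qed
      have "(\<Sum>k\<in>UNIV. V $ i $ k * (\<rho> (lam k) * c $ k))
          = (\<Sum>k\<in>UNIV. V $ i $ k * c $ k * CI k) - (\<Sum>k\<in>UNIV. V $ i $ k * c $ k * (\<Sum>j\<in>{1..m}. f (z j) / (z j - lam k) * \<omega> j))"
        unfolding \<rho>_def CI_def by (simp add: sum_subtractf[symmetric] algebra_simps)
      thus ?thesis using sw by (simp add: distrib_left sum.distrib)
    qed
    thus ?thesis
      unfolding hA hfkm T1_def T2_def
      by (simp add: vec_eq_iff sum_component matrix_vector_mult_def algebra_simps add_divide_distrib[symmetric])
  qed
  have nI: "norm ?I = 1 / (2 * pi)" by (simp add: norm_divide norm_mult)
  have Rm: "norm (\<rho> (lam l)) \<le> Rm" for l unfolding Rm_def by (rule Max_ge) auto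
  have Rm0: "0 \<le> Rm" using Rm[of undefined] norm_ge_zero order_trans by blast
  have Em: "E (z j) \<le> Em" if "j \<in> {1..m}" for j unfolding Em_def using that by (intro Max_ge) auto
  have E0: "0 \<le> E (z j)" for j unfolding E_def by simp
  have Em0: "0 \<le> Em" using Em[of 1] E0[of 1] m_pos by auto
  have M0: "0 \<le> M" using f_bound[OF zpi[of 1]] m_pos norm_ge_zero order_trans by (metis atLeastAtMost_iff order_refl)
  have oV: "0 \<le> onorm (\<lambda>x. V *v x)" by (rule onorm_pos_le) simp
  have nT1: "norm T1 \<le> 1 / (2 * pi) * onorm (\<lambda>x. V *v x) * onorm (\<lambda>x. matrix_inv V *v x) * norm bv * Rm"
  proof -
    have "norm T1 = 1 / (2 * pi) * norm (V *v (\<chi> k. \<rho> (lam k) * c $ k))"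
      unfolding T1_def norm_smult_vec nI ..
    also have "\<dots> \<le> 1 / (2 * pi) * (onorm (\<lambda>x. V *v x) * norm (\<chi> k. \<rho> (lam k) * c $ k))"
      by (intro mult_left_mono onorm) auto
    also have "\<dots> \<le> 1 / (2 * pi) * (onorm (\<lambda>x. V *v x) * (Rm * norm c))"
      by (intro mult_left_mono norm_diag_le Rm oV) auto
    also have "\<dots> \<le> 1 / (2 * pi) * (onorm (\<lambda>x. V *v x) * (Rm * (onorm (\<lambda>x. matrix_inv V *v x) * norm bv)))"
      unfolding c_def by (intro mult_left_mono onorm oV Rm0) auto
    finally show ?thesis by (simp add: mult_ac)
  qed
  have nT2: "norm T2 \<le> L * M * Em"
  proof -
    have "norm T2 = 1 / (2 * pi) * norm (\<Sum>j\<in>{1..m}. (f (z j) * \<omega> j) *s (X j + Qs j))"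
      unfolding T2_def norm_smult_vec nI ..
    also have "\<dots> \<le> 1 / (2 * pi) * (\<Sum>j\<in>{1..m}. norm ((f (z j) * \<omega> j) *s (X j + Qs j)))"
      by (intro mult_left_mono norm_sum) auto
    also have "\<dots> \<le> 1 / (2 * pi) * (\<Sum>j\<in>{1..m}. M * Em * norm (\<omega> j))"
    proof (intro mult_left_mono sum_mono)
      fix j assume j: "j \<in> {1..m}"
      have "norm ((f (z j) * \<omega> j) *s (X j + Qs j)) = norm (f (z j)) * norm (\<omega> j) * E (z j)"
        unfolding norm_smult_vec Eeq[OF j] by (simp add: norm_mult)
      also have "\<dots> \<le> M * norm (\<omega> j) * Em"
        using f_bound[OF zpi[OF j]] Em[OF j] E0[of j] M0
        by (intro mult_mono) (auto intro: mult_right_mono)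
      finally show "norm ((f (z j) * \<omega> j) *s (X j + Qs j)) \<le> M * Em * norm (\<omega> j)" by (simp add: mult_ac)
    qed auto
    also have "\<dots> = 1 / (2 * pi) * (M * Em) * (\<Sum>j\<in>{1..m}. norm (\<omega> j))"
      by (simp add: sum_distrib_left sum_divide_distrib mult_ac)
    also have "\<dots> \<le> 1 / (2 * pi) * (M * Em) * (2 * pi * L)"
      using M0 Em0 weights_bound by (intro mult_left_mono) auto
    also have "\<dots> = L * M * Em" by simp
    finally show ?thesis .
  qed
  have "norm (fun_mat_vec \<gamma> f A bv - fkm) \<le> norm T1 + norm T2" unfolding heq by (rule norm_triangle_ineq)
  thus ?thesis using nT1 nT2 unfolding Rm_def Em_def by linarith
qed

end
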